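(* Let $G:\mathbb{R}^2\to\mathbb{R}$ and constants $L\ge c>0$ satisfy, for all $u,u_0,v\in\mathbb{R}$, $|G(u,v)-G(u_0,v)|\le L|u-u_0|$ and $|G(u,v)|\ge c\sqrt{u^2+v^2}$. Let $n,m\ge1$, fix $i\in\{1,\dots,n\}$, and let $f\in L^2((0,1)^n)$ (not a.e. constant) and $h\in L^2((0,1)^{n+m-1})$ be real-valued. Suppose $g:(0,1)^{n+m}\to\mathbb{R}$ belongs to $L^2((0,1)^{n+m})$, satisfies $g(x,\xi)=G(f(x),h(x_{\sim i},\xi))$, and has mean $g_0=0$. Then $$S^g_{T_{x_i}}\le 2\frac{L^2}{c^2}\,\frac{\mathrm{Var}(f)}{\mathrm{Var}(f)+\mathrm{Var}(h)}\,S^f_{T_{x_i}}.$$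
   Context: All integrals are with respect to Lebesgue measure over unit cubes (inputs independent, uniform on $[0,1]$). $x_{\sim i}=(x_1,\dots,x_{i-1},x_{i+1},\dots,x_n)$. For $\varphi$, $\varphi_0=\int\varphi$ and $\mathrm{Var}(\varphi)=\int\varphi^2-\varphi_0^2$. The total Sobol index of $x_i$ for a square-integrable $\varphi$ of $(x,y)$ is $$S^\varphi_{T_{x_i}}=\frac{\int\varphi^2\,dx\,dy-\int\big(\int\varphi\,dx_i\big)^2dx_{\sim i}\,dy}{\mathrm{Var}(\varphi)}.$$ *)

theory Defs
  imports "HOL-Probability.Probability"
begin

definition unif :: "real measure" where
  "unif = uniform_measure lborel {0<..<1}"

definition cube :: "'a set \<Rightarrow> ('a \<Rightarrow> real) measure" where
  "cube I = PiM I (\<lambda>_. unif)"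

definition mean :: "'a set \<Rightarrow> (('a \<Rightarrow> real) \<Rightarrow> real) \<Rightarrow> real" where
  "mean I \<phi> = (\<integral>z. \<phi> z \<partial>cube I)"

definition var :: "'a set \<Rightarrow> (('a \<Rightarrow> real) \<Rightarrow> real) \<Rightarrow> real" where
  "var I \<phi> = (\<integral>z. (\<phi> z)^2 \<partial>cube I) - (mean I \<phi>)^2"

definition sq_int :: "'a set \<Rightarrow> (('a \<Rightarrow> real) \<Rightarrow> real) \<Rightarrow> bool" where
  "sq_int I \<phi> \<longleftrightarrow> \<phi> \<in> borel_measurable (cube I) \<and> integrable (cube I) (\<lambda>z. (\<phi> z)^2)"

definition total_sobol :: "'a set \<Rightarrow> (('a \<Rightarrow> real) \<Rightarrow> real) \<Rightarrow> 'a \<Rightarrow> real" where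
  "total_sobol I \<phi> k =
     ((\<integral>z. (\<phi> z)^2 \<partial>cube I)
      - (\<integral>z. (\<integral>t. \<phi> (z(k := t)) \<partial>unif)^2 \<partial>cube (I - {k}))) / var I \<phi>"

text \<open>Index set of (x, xi): x_1..x_n as Inl 0..n-1, xi_1..xi_m as Inr 0..m-1.\<close>
definition gidx :: "nat \<Rightarrow> nat \<Rightarrow> (nat + nat) set" where
  "gidx n m = Inl ` {..<n} \<union> Inr ` {..<m}"

definition hidx :: "nat \<Rightarrow> nat \<Rightarrow> nat \<Rightarrow> (nat + nat) set" where
  "hidx n m i = Inl ` ({..<n} - {i}) \<union> Inr ` {..<m}"

end

theory Submission
  imports Defs
begin


lemma space_unif[simp]: "space unif = UNIV" by (simp add: unif_def)
lemma sets_unif[simp]: "sets unif = sets borel" by (simp add: unif_def)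
lemma measurable_unif1[simp]: "measurable unif N = measurable borel N"
  by (intro measurable_cong_sets) auto
lemma measurable_unif2[simp]: "measurable N unif = measurable N borel"
  by (intro measurable_cong_sets) auto

lemma prob_unif: "prob_space unif"
  unfolding unif_def by (rule prob_space_uniform_measure) auto

interpretation U: prob_space unif by (rule prob_unif)

lemma PSF: "product_sigma_finite (\<lambda>_::'a. unif)"
  unfolding product_sigma_finite_def using U.sigma_finite_measure by simp

lemma prob_cube: "prob_space (cube I)"
  unfolding cube_def by (rule prob_space_PiM) (rule prob_unif)

lemma space_cube: "space (cube I) = PiE I (\<lambda>_. UNIV)"
  by (simp add: cube_def space_PiM)

lemma cube_insert:
  assumes fin: "finite J" and k: "k \<notin> J"
  shows "distr (cube J \<Otimes>\<^sub>M unif) (cube (insert k J)) (\<lambda>(z,t). z(k:=t)) = cube (insert k J)"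
proof -
  interpret P: product_sigma_finite "\<lambda>_. unif" by (rule PSF)
  interpret J: finite_product_sigma_finite "\<lambda>_. unif" J by standard (rule fin)
  interpret JU: pair_sigma_finite "cube J" unif
    unfolding cube_def by (simp add: pair_sigma_finite_def J.sigma_finite_measure_axioms U.sigma_finite_measure)
  show ?thesis unfolding cube_def
  proof (rule P.PiM_eqI)
    show "finite (insert k J)" using fin by simp
    show "sets (distr (PiM J (\<lambda>_. unif) \<Otimes>\<^sub>M unif) (PiM (insert k J) (\<lambda>_. unif)) (\<lambda>(z,t). z(k:=t))) = sets (PiM (insert k J) (\<lambda>_. unif))"
      by simp
    fix A assume A: "\<And>i. i \<in> insert k J \<Longrightarrow> A i \<in> sets unif"
    have pre: "(\<lambda>(z,t). z(k:=t)) -` PiE (insert k J) A \<inter> space (PiM J (\<lambda>_. unif) \<Otimes>\<^sub>M unif) = PiE J A \<times> A k"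
      using k by (auto simp: space_pair_measure space_PiM PiE_iff extensional_def split: if_splits)
    have "emeasure (distr (PiM J (\<lambda>_. unif) \<Otimes>\<^sub>M unif) (PiM (insert k J) (\<lambda>_. unif)) (\<lambda>(z,t). z(k:=t))) (PiE (insert k J) A)
       = emeasure (PiM J (\<lambda>_. unif) \<Otimes>\<^sub>M unif) (PiE J A \<times> A k)"
      using A fin by (subst emeasure_distr) (auto simp: pre intro!: sets_PiM_I_finite measurable_add_dim[of k J "\<lambda>_. unif", simplified])
    also have "\<dots> = emeasure (PiM J (\<lambda>_. unif)) (PiE J A) * emeasure unif (A k)"
      using A fin by (intro U.emeasure_pair_measure_Times) (auto intro!: sets_PiM_I_finite)
    also have "\<dots> = (\<Prod>i\<in>insert k J. emeasure unif (A i))"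
      using A fin k by (simp add: J.measure_times mult.commute)
    finally show "emeasure (distr (PiM J (\<lambda>_. unif) \<Otimes>\<^sub>M unif) (PiM (insert k J) (\<lambda>_. unif)) (\<lambda>(z,t). z(k:=t))) (PiE (insert k J) A) = (\<Prod>i\<in>insert k J. emeasure unif (A i))" .
  qed
qed

lemma cube_marg:
  assumes finI: "finite I" and finK: "finite K" and inj: "inj_on e K" and sub: "e ` K \<subseteq> I"
  shows "distr (cube I) (cube K) (\<lambda>z. \<lambda>j\<in>K. z (e j)) = cube K"
proof -
  interpret P: product_sigma_finite "\<lambda>_. unif" by (rule PSF)
  have meas: "(\<lambda>z. \<lambda>j\<in>K. z (e j)) \<in> measurable (PiM I (\<lambda>_. unif)) (PiM K (\<lambda>_. unif))"
    using sub by (intro measurable_restrict) (auto intro!: measurable_component_singleton[of _ I "\<lambda>_. unif", simplified])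
  show ?thesis unfolding cube_def
  proof (rule P.PiM_eqI)
    show "finite K" by fact
    show "sets (distr (PiM I (\<lambda>_. unif)) (PiM K (\<lambda>_. unif)) (\<lambda>z. \<lambda>j\<in>K. z (e j))) = sets (PiM K (\<lambda>_. unif))"
      by simp
    fix A assume A: "\<And>i. i \<in> K \<Longrightarrow> A i \<in> sets unif"
    define A' where "A' x = (if x \<in> e ` K then A (the_inv_into K e x) else UNIV)" for x
    have A'e: "A' (e j) = A j" if "j \<in> K" for j
      using that inj by (simp add: A'_def the_inv_into_f_f)
    have A's: "A' x \<in> sets unif" for x
      using A inj by (auto simp: A'_def the_inv_into_f_f)
    have pre: "(\<lambda>z. \<lambda>j\<in>K. z (e j)) -` PiE K A \<inter> space (PiM I (\<lambda>_. unif)) = PiE I A'"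
    proof (rule set_eqI, rule iffI)
      fix z assume z: "z \<in> (\<lambda>z. \<lambda>j\<in>K. z (e j)) -` PiE K A \<inter> space (PiM I (\<lambda>_. unif))"
      show "z \<in> PiE I A'"
        using z inj by (auto simp: space_PiM PiE_iff A'_def the_inv_into_f_f)
    next
      fix z assume z: "z \<in> PiE I A'"
      then have "(\<lambda>j\<in>K. z (e j)) \<in> PiE K A"
        using sub A'e by (auto simp: PiE_iff)
      moreover have "z \<in> space (PiM I (\<lambda>_. unif))" using z by (auto simp: space_PiM PiE_iff)
      ultimately show "z \<in> (\<lambda>z. \<lambda>j\<in>K. z (e j)) -` PiE K A \<inter> space (PiM I (\<lambda>_. unif))" by simp
    qed
    have "emeasure (distr (PiM I (\<lambda>_. unif)) (PiM K (\<lambda>_. unif)) (\<lambda>z. \<lambda>j\<in>K. z (e j))) (PiE K A)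
        = emeasure (PiM I (\<lambda>_. unif)) (PiE I A')"
      using A finK by (subst emeasure_distr[OF meas]) (auto simp: pre intro!: sets_PiM_I_finite)
    also have "\<dots> = (\<Prod>x\<in>I. emeasure unif (A' x))"
      using A's finI by (intro finite_product_sigma_finite.measure_times) (auto simp: finite_product_sigma_finite_def finite_product_sigma_finite_axioms_def PSF)
    also have "\<dots> = (\<Prod>x\<in>e ` K. emeasure unif (A' x))"
      using finI sub U.emeasure_space_1 by (intro prod.mono_neutral_right) (auto simp: A'_def)
    also have "\<dots> = (\<Prod>j\<in>K. emeasure unif (A j))"
      using inj by (simp add: prod.reindex A'e)
    finally show "emeasure (distr (PiM I (\<lambda>_. unif)) (PiM K (\<lambda>_. unif)) (\<lambda>z. \<lambda>j\<in>K. z (e j))) (PiE K A) = (\<Prod>j\<in>K. emeasure unif (A j))" .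
  qed
qed

lemma pair_cube_unif: "pair_sigma_finite (cube J) unif"
  unfolding pair_sigma_finite_def
  using prob_space_imp_sigma_finite[OF prob_cube] U.sigma_finite_measure by simp

lemma meas_upd: "(\<lambda>(z,t). z(k:=t)) \<in> measurable (cube J \<Otimes>\<^sub>M unif) (cube (insert k J))"
  unfolding cube_def using measurable_add_dim[of k J "\<lambda>_. unif"] by simp

lemma cube_insert': "finite I \<Longrightarrow> k \<in> I \<Longrightarrow>
  distr (cube (I - {k}) \<Otimes>\<^sub>M unif) (cube I) (\<lambda>(z,t). z(k:=t)) = cube I"
  using cube_insert[where J="I - {k}" and k=k] by (simp add: insert_absorb)

lemma meas_upd': "k \<in> I \<Longrightarrow> (\<lambda>(z,t). z(k:=t)) \<in> measurable (cube (I - {k}) \<Otimes>\<^sub>M unif) (cube I)"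
  using meas_upd[where J="I - {k}" and k=k] by (simp add: insert_absorb)

lemma sect_AE:
  assumes "finite I" "k \<in> I" "AE z in cube I. Q z"
  shows "AE z in cube (I - {k}). AE t in unif. Q (z(k:=t))"
proof -
  interpret pair_sigma_finite "cube (I - {k})" unif by (rule pair_cube_unif)
  have "AE x in cube (I - {k}) \<Otimes>\<^sub>M unif. Q ((\<lambda>(z,t). z(k:=t)) x)"
    by (rule AE_distrD[OF meas_upd'[OF assms(2)]]) (subst cube_insert'[OF assms(1,2)], rule assms(3))
  from AE_pair[OF this] show ?thesis by simp
qed

lemma sect_int:
  fixes \<phi> :: "_ \<Rightarrow> real"
  assumes fin: "finite I" and k: "k \<in> I" and int: "integrable (cube I) \<phi>"
  shows "AE z in cube (I - {k}). integrable unif (\<lambda>t. \<phi> (z(k:=t)))"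
    and "integrable (cube (I - {k})) (\<lambda>z. \<integral>t. \<phi> (z(k:=t)) \<partial>unif)"
    and "integral\<^sup>L (cube I) \<phi> = (\<integral>z. (\<integral>t. \<phi> (z(k:=t)) \<partial>unif) \<partial>cube (I - {k}))"
proof -
  interpret pair_sigma_finite "cube (I - {k})" unif by (rule pair_cube_unif)
  have m: "(\<lambda>(z,t). z(k:=t)) \<in> measurable (cube (I - {k}) \<Otimes>\<^sub>M unif) (cube I)" by (rule meas_upd'[OF k])
  have i2: "integrable (cube (I - {k}) \<Otimes>\<^sub>M unif) (\<lambda>x. \<phi> ((\<lambda>(z,t). z(k:=t)) x))"
    using int cube_insert'[OF fin k] integrable_distr_eq[OF m, of \<phi>] by simp
  show "AE z in cube (I - {k}). integrable unif (\<lambda>t. \<phi> (z(k:=t)))"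
    using AE_integrable_fst'[OF i2] by simp
  show "integrable (cube (I - {k})) (\<lambda>z. \<integral>t. \<phi> (z(k:=t)) \<partial>unif)"
    using integrable_fst'[OF i2] by simp
  have "integral\<^sup>L (cube I) \<phi> = integral\<^sup>L (distr (cube (I - {k}) \<Otimes>\<^sub>M unif) (cube I) (\<lambda>(z,t). z(k:=t))) \<phi>"
    using cube_insert'[OF fin k] by simp
  also have "\<dots> = integral\<^sup>L (cube (I - {k}) \<Otimes>\<^sub>M unif) (\<lambda>x. \<phi> ((\<lambda>(z,t). z(k:=t)) x))"
    using int by (intro integral_distr[OF m]) auto
  also have "\<dots> = (\<integral>z. (\<integral>t. \<phi> (z(k:=t)) \<partial>unif) \<partial>cube (I - {k}))"
    using integral_fst'[OF i2] by simp
  finally show "integral\<^sup>L (cube I) \<phi> = (\<integral>z. (\<integral>t. \<phi> (z(k:=t)) \<partial>unif) \<partial>cube (I - {k}))" .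
qed

lemma mUU: "measure unif UNIV = 1" using U.prob_space by simp

lemma sq_le_sq_int:
  fixes \<psi> :: "real \<Rightarrow> real"
  assumes "integrable unif \<psi>" "integrable unif (\<lambda>t. (\<psi> t)^2)"
  shows "(\<integral>t. \<psi> t \<partial>unif)^2 \<le> (\<integral>t. (\<psi> t)^2 \<partial>unif)"
  using U.variance_positive[of \<psi>] U.variance_eq[OF assms] by simp

lemma decomp:
  fixes \<phi> :: "_ \<Rightarrow> real"
  assumes fin: "finite I" and k: "k \<in> I" and sq: "sq_int I \<phi>"
  defines "V \<equiv> \<lambda>z. (\<integral>t. (\<phi> (z(k:=t)))^2 \<partial>unif) - (\<integral>t. \<phi> (z(k:=t)) \<partial>unif)^2"
  shows "integrable (cube (I-{k})) V"
    and "(\<integral>z. (\<phi> z)^2 \<partial>cube I) - (\<integral>z. (\<integral>t. \<phi> (z(k:=t)) \<partial>unif)^2 \<partial>cube (I-{k}))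
          = integral\<^sup>L (cube (I-{k})) V"
    and "AE z in cube (I-{k}). integrable unif (\<lambda>t. \<phi> (z(k:=t))) \<and> integrable unif (\<lambda>t. (\<phi> (z(k:=t)))^2)"
    and "AE z in cube (I-{k}). 0 \<le> V z"
proof -
  interpret C: prob_space "cube I" by (rule prob_cube)
  have m: "\<phi> \<in> borel_measurable (cube I)" and i2: "integrable (cube I) (\<lambda>z. (\<phi> z)^2)"
    using sq by (auto simp: sq_int_def)
  have i1: "integrable (cube I) \<phi>"
    by (rule C.square_integrable_imp_integrable[OF m i2])
  define S where "S z = (\<integral>t. (\<phi> (z(k:=t)))^2 \<partial>unif)" for z
  define M where "M z = (\<integral>t. \<phi> (z(k:=t)) \<partial>unif)" for z
  have intS: "integrable (cube (I-{k})) S"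
    unfolding S_def using sect_int(2)[OF fin k i2] by simp
  have intM: "integrable (cube (I-{k})) M"
    unfolding M_def using sect_int(2)[OF fin k i1] by simp
  show AEi: "AE z in cube (I-{k}). integrable unif (\<lambda>t. \<phi> (z(k:=t))) \<and> integrable unif (\<lambda>t. (\<phi> (z(k:=t)))^2)"
    using sect_int(1)[OF fin k i1] sect_int(1)[OF fin k i2] by eventually_elim simp
  have AEle: "AE z in cube (I-{k}). (M z)^2 \<le> S z"
    using AEi by eventually_elim (auto simp: M_def S_def intro!: sq_le_sq_int)
  have intM2: "integrable (cube (I-{k})) (\<lambda>z. (M z)^2)"
  proof (rule Bochner_Integration.integrable_bound[OF intS])
    show "(\<lambda>z. (M z)^2) \<in> borel_measurable (cube (I-{k}))"
      using borel_measurable_integrable[OF intM] by measurable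
    show "AE z in cube (I-{k}). norm ((M z)^2) \<le> norm (S z)"
      using AEle by eventually_elim auto
  qed
  have VSM: "V = (\<lambda>z. S z - (M z)^2)" unfolding V_def S_def M_def by simp
  show "integrable (cube (I-{k})) V" unfolding VSM using intS intM2 by simp
  show "AE z in cube (I-{k}). 0 \<le> V z" unfolding VSM using AEle by eventually_elim simp
  have "(\<integral>z. (\<phi> z)^2 \<partial>cube I) = integral\<^sup>L (cube (I-{k})) S"
    unfolding S_def using sect_int(3)[OF fin k i2] by simp
  then show "(\<integral>z. (\<phi> z)^2 \<partial>cube I) - (\<integral>z. (\<integral>t. \<phi> (z(k:=t)) \<partial>unif)^2 \<partial>cube (I-{k}))
          = integral\<^sup>L (cube (I-{k})) V"
    unfolding VSM using intS intM2 by (simp add: M_def)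
qed

lemma var_cmp:
  fixes a b :: "real \<Rightarrow> real" and B L :: real
  assumes ia: "integrable unif a" "integrable unif (\<lambda>t. (a t)^2)"
    and ib: "integrable unif b" "integrable unif (\<lambda>t. (b t)^2)"
    and L: "0 \<le> L"
    and le: "AE t in unif. \<bar>a t - B\<bar> \<le> L * \<bar>b t - (\<integral>s. b s \<partial>unif)\<bar>"
  shows "(\<integral>t. (a t)^2 \<partial>unif) - (\<integral>t. a t \<partial>unif)^2
         \<le> L^2 * ((\<integral>t. (b t)^2 \<partial>unif) - (\<integral>t. b t \<partial>unif)^2)"
proof -
  define \<beta> where "\<beta> = (\<integral>s. b s \<partial>unif)"
  have e1: "(\<integral>t. (a t - B)^2 \<partial>unif) = (\<integral>t. (a t)^2 \<partial>unif) - 2 * B * (\<integral>t. a t \<partial>unif) + B^2"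
    using ia by (simp add: power2_diff U.prob_space mUU)
  have e2: "(\<integral>t. (L * (b t - \<beta>))^2 \<partial>unif) = L^2 * ((\<integral>t. (b t)^2 \<partial>unif) - 2 * \<beta> * (\<integral>t. b t \<partial>unif) + \<beta>^2)"
    using ib by (simp add: power2_diff U.prob_space mUU power_mult_distrib algebra_simps power2_eq_square)
  have "(\<integral>t. (a t - B)^2 \<partial>unif) \<le> (\<integral>t. (L * (b t - \<beta>))^2 \<partial>unif)"
  proof (rule integral_mono_AE)
    show "integrable unif (\<lambda>t. (a t - B)^2)" using ia by (simp add: power2_diff)
    show "integrable unif (\<lambda>t. (L * (b t - \<beta>))^2)" using ib by (simp add: power2_diff power_mult_distrib)
    show "AE t in unif. (a t - B)^2 \<le> (L * (b t - \<beta>))^2"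
      using le unfolding \<beta>_def[symmetric]
    proof eventually_elim
      case (elim t)
      then have "\<bar>a t - B\<bar> \<le> \<bar>L * (b t - \<beta>)\<bar>" using L by (simp add: abs_mult)
      then show ?case by (simp add: abs_le_square_iff)
    qed
  qed
  moreover have "0 \<le> ((\<integral>t. a t \<partial>unif) - B)^2" by simp
  ultimately show ?thesis using e1 e2 unfolding \<beta>_def[symmetric]
    by (simp add: power2_diff algebra_simps power2_eq_square)
qed

lemma marg_meas:
  assumes "e ` K \<subseteq> I"
  shows "(\<lambda>z. \<lambda>j\<in>K. z (e j)) \<in> measurable (cube I) (cube K)"
  unfolding cube_def
  using assms by (intro measurable_restrict) (auto intro!: measurable_component_singleton[of _ I "\<lambda>_. unif", simplified])

lemma marg:
  assumes fin: "finite I" "finite K" "inj_on e K" and sub: "e ` K \<subseteq> I"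
  shows marg_int: "\<And>\<psi>::_\<Rightarrow>real. \<psi> \<in> borel_measurable (cube K) \<Longrightarrow>
           integral\<^sup>L (cube K) \<psi> = (\<integral>z. \<psi> (\<lambda>j\<in>K. z (e j)) \<partial>cube I)"
    and marg_integrable: "\<And>\<psi>::_\<Rightarrow>real. integrable (cube K) \<psi> \<Longrightarrow>
           integrable (cube I) (\<lambda>z. \<psi> (\<lambda>j\<in>K. z (e j)))"
    and marg_AE: "\<And>Q. (AE y in cube K. Q y) \<Longrightarrow> AE z in cube I. Q (\<lambda>j\<in>K. z (e j))"
proof -
  note m = marg_meas[OF sub]
  note D = cube_marg[OF fin sub]
  fix \<psi> :: "_ \<Rightarrow> real" assume "\<psi> \<in> borel_measurable (cube K)"
  then show "integral\<^sup>L (cube K) \<psi> = (\<integral>z. \<psi> (\<lambda>j\<in>K. z (e j)) \<partial>cube I)"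
    using integral_distr[OF m, of \<psi>] D by simp
next
  note m = marg_meas[OF sub]
  note D = cube_marg[OF fin sub]
  fix \<psi> :: "_ \<Rightarrow> real" assume "integrable (cube K) \<psi>"
  then show "integrable (cube I) (\<lambda>z. \<psi> (\<lambda>j\<in>K. z (e j)))"
    using integrable_distr_eq[OF m, of \<psi>] D by simp
next
  note m = marg_meas[OF sub]
  note D = cube_marg[OF fin sub]
  fix Q assume "AE y in cube K. Q y"
  then show "AE z in cube I. Q (\<lambda>j\<in>K. z (e j))"
    by (intro AE_distrD[OF m]) (subst D, assumption)
qed

lemma var_facts:
  fixes \<phi> :: "_ \<Rightarrow> real"
  assumes sq: "sq_int K \<phi>"
  shows "0 \<le> var K \<phi>" and "var K \<phi> \<le> (\<integral>z. (\<phi> z)^2 \<partial>cube K)"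
    and "\<not> (\<exists>a. AE x in cube K. \<phi> x = a) \<Longrightarrow> 0 < var K \<phi>"
proof -
  interpret C: prob_space "cube K" by (rule prob_cube)
  have m: "\<phi> \<in> borel_measurable (cube K)" and i2: "integrable (cube K) (\<lambda>z. (\<phi> z)^2)"
    using sq by (auto simp: sq_int_def)
  have i1: "integrable (cube K) \<phi>"
    by (rule C.square_integrable_imp_integrable[OF m i2])
  have ve: "var K \<phi> = C.variance \<phi>"
    unfolding var_def mean_def using C.variance_eq[OF i1 i2] by simp
  show "0 \<le> var K \<phi>" unfolding ve by (rule C.variance_positive)
  show "var K \<phi> \<le> (\<integral>z. (\<phi> z)^2 \<partial>cube K)" unfolding var_def by simp
  assume nc: "\<not> (\<exists>a. AE x in cube K. \<phi> x = a)"
  show "0 < var K \<phi>"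
  proof (rule ccontr)
    assume "\<not> 0 < var K \<phi>"
    then have "C.variance \<phi> = 0" using C.variance_positive[of \<phi>] ve by linarith
    moreover have "integrable (cube K) (\<lambda>x. (\<phi> x - C.expectation \<phi>)^2)"
      using i1 i2 by (simp add: power2_diff)
    ultimately have "AE x in cube K. (\<phi> x - C.expectation \<phi>)^2 = 0"
      using integral_nonneg_eq_0_iff_AE[of "cube K" "\<lambda>x. (\<phi> x - C.expectation \<phi>)^2"] by simp
    then have "AE x in cube K. \<phi> x = C.expectation \<phi>" by eventually_elim simp
    with nc show False by blast
  qed
qed



theorem theoremD4:
  fixes G :: "real \<Rightarrow> real \<Rightarrow> real" and L c :: real and n m i :: nat
    and f :: "(nat \<Rightarrow> real) \<Rightarrow> real" and h g :: "(nat + nat \<Rightarrow> real) \<Rightarrow> real"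
  assumes "0 < c" and "c \<le> L"
    and "\<forall>u u0 v. \<bar>G u v - G u0 v\<bar> \<le> L * \<bar>u - u0\<bar>"
    and "\<forall>u v. c * sqrt (u^2 + v^2) \<le> \<bar>G u v\<bar>"
    and "1 \<le> n" and "1 \<le> m" and "i < n"
    and "sq_int {..<n} f" and "\<not> (\<exists>a. AE x in cube {..<n}. f x = a)"
    and "sq_int (hidx n m i) h"
    and "sq_int (gidx n m) g"
    and "AE z in cube (gidx n m). g z = G (f (\<lambda>j. z (Inl j))) (h (restrict z (hidx n m i)))"
    and "mean (gidx n m) g = 0"
  shows "total_sobol (gidx n m) g (Inl i)
           \<le> 2 * L^2 / c^2 * (var {..<n} f / (var {..<n} f + var (hidx n m i) h))
               * total_sobol {..<n} f i"
proof -
  note c0 = assms(1) and cL = assms(2) and Lip = assms(3) and Glow = assms(4)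
  define I where "I = gidx n m"
  define J where "J = I - {Inl i}"
  define K where "K = {..<n}"
  define K' where "K' = K - {i}"
  define H where "H = hidx n m i"
  have finI: "finite I" by (simp add: I_def gidx_def)
  have finJ: "finite J" by (simp add: J_def finI)
  have finK: "finite K" by (simp add: K_def)
  have finK': "finite K'" by (simp add: K'_def finK)
  have finH: "finite H" by (simp add: H_def hidx_def)
  have kI: "Inl i \<in> I" using assms(7) by (simp add: I_def gidx_def)
  have iK: "i \<in> K" using assms(7) by (simp add: K_def)
  have HI: "id ` H \<subseteq> I" by (auto simp: H_def I_def hidx_def gidx_def)
  have KI: "Inl ` K \<subseteq> I" by (auto simp: K_def I_def gidx_def)
  have K'J: "Inl ` K' \<subseteq> J" by (auto simp: K'_def K_def J_def I_def gidx_def)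
  have InlH: "Inl i \<notin> H" by (auto simp: H_def hidx_def)
  have L0: "0 \<le> L" using c0 cL by simp
  have sqf: "sq_int K f" using assms(8) by (simp add: K_def)
  have sqh: "sq_int H h" using assms(10) by (simp add: H_def)
  have sqg: "sq_int I g" using assms(11) by (simp add: I_def)
  have gAE0: "AE z in cube I. g z = G (f (\<lambda>j. z (Inl j))) (h (restrict z H))"
    unfolding I_def H_def by (rule assms(12))
  have Feq0: "(\<lambda>j. z (Inl j)) = (\<lambda>j\<in>K. z (Inl j))" if "z \<in> space (cube I)" for z
    using that by (auto simp: space_cube PiE_iff extensional_def I_def gidx_def K_def fun_eq_iff)
  have Feq: "f (\<lambda>j. z (Inl j)) = f (\<lambda>j\<in>K. z (Inl j))" if "z \<in> space (cube I)" for z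
    using Feq0[OF that] by metis
  have Req: "restrict z H = (\<lambda>j\<in>H. z (id j))" for z by simp
  have gAE: "AE z in cube I. g z = G (f (\<lambda>j\<in>K. z (Inl j))) (h (\<lambda>j\<in>H. z (id j)))"
    using gAE0 AE_space by eventually_elim (simp add: Feq)

  have mf: "f \<in> borel_measurable (cube K)" and if2: "integrable (cube K) (\<lambda>z. (f z)^2)"
    using sqf by (auto simp: sq_int_def)
  have mh: "h \<in> borel_measurable (cube H)" and ih2: "integrable (cube H) (\<lambda>z. (h z)^2)"
    using sqh by (auto simp: sq_int_def)
  have mg: "g \<in> borel_measurable (cube I)" and ig2: "integrable (cube I) (\<lambda>z. (g z)^2)"
    using sqg by (auto simp: sq_int_def)
  have injInl: "inj_on Inl K" by simp
  have injid: "inj_on id H" by simp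
  have int_f2: "integrable (cube I) (\<lambda>z. (f (\<lambda>j\<in>K. z (Inl j)))^2)"
    using marg_integrable[OF finI finK injInl KI if2] .
  have int_h2: "integrable (cube I) (\<lambda>z. (h (\<lambda>j\<in>H. z (id j)))^2)"
    using marg_integrable[OF finI finH injid HI ih2] .
  have eqf2: "(\<integral>z. (f z)^2 \<partial>cube K) = (\<integral>z. (f (\<lambda>j\<in>K. z (Inl j)))^2 \<partial>cube I)"
    using marg_int[OF finI finK injInl KI, of "\<lambda>z. (f z)^2"] mf by simp
  have eqh2: "(\<integral>z. (h z)^2 \<partial>cube H) = (\<integral>z. (h (\<lambda>j\<in>H. z (id j)))^2 \<partial>cube I)"
    using marg_int[OF finI finH injid HI, of "\<lambda>z. (h z)^2"] mh by simp
  have lowg: "c^2 * ((\<integral>z. (f z)^2 \<partial>cube K) + (\<integral>z. (h z)^2 \<partial>cube H)) \<le> (\<integral>z. (g z)^2 \<partial>cube I)"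
  proof -
    have "c^2 * ((\<integral>z. (f z)^2 \<partial>cube K) + (\<integral>z. (h z)^2 \<partial>cube H))
        = (\<integral>z. c^2 * ((f (\<lambda>j\<in>K. z (Inl j)))^2 + (h (\<lambda>j\<in>H. z (id j)))^2) \<partial>cube I)"
      unfolding eqf2 eqh2 using int_f2 int_h2 by simp
    also have "\<dots> \<le> (\<integral>z. (g z)^2 \<partial>cube I)"
    proof (rule integral_mono_AE)
      show "integrable (cube I) (\<lambda>z. c^2 * ((f (\<lambda>j\<in>K. z (Inl j)))^2 + (h (\<lambda>j\<in>H. z (id j)))^2))"
        using int_f2 int_h2 by simp
      show "integrable (cube I) (\<lambda>z. (g z)^2)" by (rule ig2)
      show "AE z in cube I. c^2 * ((f (\<lambda>j\<in>K. z (Inl j)))^2 + (h (\<lambda>j\<in>H. z (id j)))^2) \<le> (g z)^2"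
        using gAE
      proof eventually_elim
        case (elim z)
        define u where "u = f (\<lambda>j\<in>K. z (Inl j))"
        define v where "v = h (\<lambda>j\<in>H. z (id j))"
        have "c * sqrt (u^2 + v^2) \<le> \<bar>G u v\<bar>" using Glow by simp
        moreover have "0 \<le> c * sqrt (u^2 + v^2)" using c0 by simp
        ultimately have "(c * sqrt (u^2 + v^2))^2 \<le> \<bar>G u v\<bar>^2" by (rule power_mono)
        then have "c^2 * (u^2 + v^2) \<le> (G u v)^2" by (simp add: power_mult_distrib)
        then show ?case using elim by (simp add: u_def v_def)
      qed
    qed
    finally show ?thesis .
  qed
  have varg: "var I g = (\<integral>z. (g z)^2 \<partial>cube I)"
    using assms(13) by (simp add: var_def I_def)
  have vf_pos: "0 < var K f" unfolding K_def by (rule var_facts(3)[OF assms(8) assms(9)])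
  have vf_le: "var K f \<le> (\<integral>z. (f z)^2 \<partial>cube K)" by (rule var_facts(2)[OF sqf])
  have vh_nn: "0 \<le> var H h" by (rule var_facts(1)[OF sqh])
  have vh_le: "var H h \<le> (\<integral>z. (h z)^2 \<partial>cube H)" by (rule var_facts(2)[OF sqh])
  have vg_low: "c^2 * (var K f + var H h) \<le> var I g"
  proof -
    have "c^2 * (var K f + var H h) \<le> c^2 * ((\<integral>z. (f z)^2 \<partial>cube K) + (\<integral>z. (h z)^2 \<partial>cube H))"
      using vf_le vh_le by (intro mult_left_mono) auto
    then show ?thesis using lowg varg by simp
  qed

  have JI: "I - {Inl i} = J" by (simp add: J_def)
  have K'K: "K - {i} = K'" by (simp add: K'_def)
  note dg = decomp[OF finI kI sqg, unfolded JI]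
  note df = decomp[OF finK iK sqf, unfolded K'K]
  define Vg where "Vg z = (\<integral>t. (g (z(Inl i:=t)))^2 \<partial>unif) - (\<integral>t. g (z(Inl i:=t)) \<partial>unif)^2" for z
  define Vf where "Vf y = (\<integral>t. (f (y(i:=t)))^2 \<partial>unif) - (\<integral>t. f (y(i:=t)) \<partial>unif)^2" for y
  define T where "T z = (\<lambda>j\<in>K'. z (Inl j))" for z :: "nat + nat \<Rightarrow> real"
  have injK': "inj_on Inl K'" by simp
  have intVg: "integrable (cube J) Vg" using dg(1) unfolding Vg_def[abs_def] .
  have intVf: "integrable (cube K') Vf" using df(1) unfolding Vf_def[abs_def] .
  have intVfT: "integrable (cube J) (\<lambda>z. Vf (T z))"
    unfolding T_def using marg_integrable[OF finJ finK' injK' K'J intVf] .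
  have eqVf: "integral\<^sup>L (cube K') Vf = (\<integral>z. Vf (T z) \<partial>cube J)"
    unfolding T_def using marg_int[OF finJ finK' injK' K'J, of Vf] borel_measurable_integrable[OF intVf] by simp
  have numg: "(\<integral>z. (g z)^2 \<partial>cube I) - (\<integral>z. (\<integral>t. g (z(Inl i:=t)) \<partial>unif)^2 \<partial>cube J) = integral\<^sup>L (cube J) Vg"
    using dg(2) unfolding Vg_def[abs_def] .
  have numf: "(\<integral>z. (f z)^2 \<partial>cube K) - (\<integral>z. (\<integral>t. f (z(i:=t)) \<partial>unif)^2 \<partial>cube K') = integral\<^sup>L (cube K') Vf"
    using df(2) unfolding Vf_def[abs_def] .
  have numf_nn: "0 \<le> integral\<^sup>L (cube K') Vf"
    using df(4) unfolding Vf_def[abs_def] by (rule integral_nonneg_AE)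
  have A1: "AE z in cube J. integrable unif (\<lambda>t. g (z(Inl i:=t))) \<and> integrable unif (\<lambda>t. (g (z(Inl i:=t)))^2)"
    using dg(3) .
  have A2: "AE z in cube J. AE t in unif. g (z(Inl i:=t)) = G (f (\<lambda>j. (z(Inl i:=t)) (Inl j))) (h (restrict (z(Inl i:=t)) H))"
    using sect_AE[OF finI kI gAE0] unfolding JI .
  have A3: "AE z in cube J. integrable unif (\<lambda>t. f ((T z)(i:=t))) \<and> integrable unif (\<lambda>t. (f ((T z)(i:=t)))^2)"
    unfolding T_def using marg_AE[OF finJ finK' injK' K'J df(3)] .
  have AEle: "AE z in cube J. Vg z \<le> L^2 * Vf (T z)"
    using A1 A2 A3 AE_space
  proof eventually_elim
    case (elim z)
    have F1: "(\<lambda>j. (z(Inl i:=t)) (Inl j)) = (T z)(i:=t)" for t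
      using elim(4) by (auto simp: T_def space_cube PiE_iff extensional_def J_def I_def gidx_def K'_def K_def fun_eq_iff)
    have R1: "restrict (z(Inl i:=t)) H = restrict z H" for t
      using InlH by (auto simp: fun_eq_iff)
    define b where "b t = f ((T z)(i:=t))" for t
    define v where "v = h (restrict z H)"
    have ae: "AE t in unif. g (z(Inl i:=t)) = G (b t) v"
      unfolding b_def v_def using elim(2) unfolding F1 R1 .
    have "Vg z \<le> L^2 * ((\<integral>t. (b t)^2 \<partial>unif) - (\<integral>t. b t \<partial>unif)^2)"
      unfolding Vg_def
    proof (rule var_cmp[where B = "G (\<integral>s. b s \<partial>unif) v"])
      show "integrable unif (\<lambda>t. g (z(Inl i:=t)))" "integrable unif (\<lambda>t. (g (z(Inl i:=t)))^2)"
        using elim(1) by auto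
      show "integrable unif b" "integrable unif (\<lambda>t. (b t)^2)"
        using elim(3) unfolding b_def[abs_def] by auto
      show "0 \<le> L" by (rule L0)
      show "AE t in unif. \<bar>g (z(Inl i:=t)) - G (\<integral>s. b s \<partial>unif) v\<bar> \<le> L * \<bar>b t - (\<integral>s. b s \<partial>unif)\<bar>"
        using ae by eventually_elim (simp add: Lip)
    qed
    then show ?case by (simp add: Vf_def b_def)
  qed
  have num_le: "integral\<^sup>L (cube J) Vg \<le> L^2 * integral\<^sup>L (cube K') Vf"
  proof -
    have "integral\<^sup>L (cube J) Vg \<le> (\<integral>z. L^2 * Vf (T z) \<partial>cube J)"
      using intVg intVfT AEle by (intro integral_mono_AE) auto
    then show ?thesis using eqVf by simp
  qed

  define Ng where "Ng = integral\<^sup>L (cube J) Vg"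
  define Nf where "Nf = integral\<^sup>L (cube K') Vf"
  define vg where "vg = var I g"
  define vf where "vf = var K f"
  define vh where "vh = var H h"
  have lhs: "total_sobol (gidx n m) g (Inl i) = Ng / vg"
    unfolding total_sobol_def I_def[symmetric] JI Ng_def vg_def numg by (rule refl)
  have rhs: "total_sobol {..<n} f i = Nf / vf"
    unfolding total_sobol_def K_def[symmetric] K'K Nf_def vf_def numf by (rule refl)
  have vh': "var (hidx n m i) h = vh" unfolding vh_def H_def ..
  have vf': "var {..<n} f = vf" unfolding vf_def K_def ..
  have h1: "Ng \<le> L^2 * Nf" using num_le by (simp add: Ng_def Nf_def)
  have h2: "0 \<le> Nf" using numf_nn by (simp add: Nf_def)
  have h3: "c^2 * (vf + vh) \<le> vg" using vg_low by (simp add: vf_def vh_def vg_def)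
  have h4: "0 < vf" using vf_pos by (simp add: vf_def)
  have h5: "0 \<le> vh" using vh_nn by (simp add: vh_def)
  define D where "D = c^2 * (vf + vh)"
  have D0: "0 < D" unfolding D_def using c0 h4 h5 by simp
  have "Ng / vg \<le> L^2 * Nf / vg"
    using h1 D0 h3 unfolding D_def[symmetric] by (intro divide_right_mono) auto
  also have "\<dots> \<le> L^2 * Nf / D"
    using h2 D0 h3 unfolding D_def[symmetric] by (intro divide_left_mono) auto
  also have "\<dots> \<le> 2 * (L^2 * Nf / D)"
  proof -
    have "0 \<le> L^2 * Nf / D" using h2 D0 by simp
    then show ?thesis unfolding mult_2 by (rule add_increasing2) simp
  qed
  also have "\<dots> = 2 * L^2 / c^2 * (vf / (vf + vh)) * (Nf / vf)"
    unfolding D_def using h4 h5 c0 by (simp add: field_simps)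
  finally show ?thesis unfolding lhs rhs vh' vf' .
qed

end
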